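(* Let $S_5\subseteq G^5$ be the stabilizer group generated by $g_1=X\otimes Z\otimes Z\otimes X\otimes I$, $g_2=I\otimes X\otimes Z\otimes Z\otimes X$, $g_3=X\otimes I\otimes X\otimes Z\otimes Z$, $g_4=Z\otimes X\otimes I\otimes X\otimes Z$. Each $\epsilon\in\mathbb{F}_2^4$ is the syndrome of exactly one element of $\{I^{\otimes5}\}\cup\{\text{single-qubit }X,Y,Z\text{ errors}\}$ (16 elements); let $\phi(\epsilon)$ be that element. Then, with this $\phi$, $f_{S_5}(0)=f_{S_5}(1)=1$, $f_{S_5}(2)=\tfrac{7}{16}$, and $f_{S_5}(t)=0$ for $t=3,4,5$.
   Context: $X=\begin{pmatrix}0&1\\1&0\end{pmatrix}$, $Y=\begin{pmatrix}0&1\\-1&0\end{pmatrix}$, $Z=\begin{pmatrix}1&0\\0&-1\end{pmatrix}$. For a stabilizer group $S\subseteq G^n$ (abelian subgroup of the $n$-qubit Pauli group not containing $-I$) with independent generators $g_1,\dots,g_r$, the syndrome of a Pauli operator $g$ is $\epsilon(g)\in\mathbb{F}_2^r$, $\epsilon_i(g)=0$ if $g$ commutes with $g_i$ and $1$ if it anticommutes. For $\{m\}\subseteq\{1,\dots,n\}$, $P^{\{m\}}$ is the set of tensor products that are one of $I,X,Y,Z$ on each qubit of $\{m\}$ and $I$ elsewhere. Given an error correcting function $\phi:\mathbb{F}_2^r\to G^n$, call a syndrome $\epsilon\in\Sigma_{\{m\}}:=\{\epsilon(g):g\in P^{\{m\}}\}$ good for $\{m\}$ if $\phi(\epsilon)g\in\{\lambda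 s:s\in S,\lambda\in\{\pm1,\pm i\}\}$ for every $g\in P^{\{m\}}$ with $\epsilon(g)=\epsilon$. Define, for $t=0,\dots,n$, $$f_S(t)=\binom{n}{t}^{-1}\sum_{|\{m\}|=t}\frac{|\{\epsilon\in\Sigma_{\{m\}}:\epsilon\text{ good for }\{m\}\}|}{|\Sigma_{\{m\}}|},$$ the sum over all $t$-element subsets $\{m\}$; this is the probability that a random error affecting $t$ randomly located qubits is corrected. *)

theory Defs
  imports Complex_Main
begin

datatype pauli1 = PI | PX | PY | PZ

text \<open>Concrete 2x2 matrices (rows/columns indexed by bool, False = first basis vector),
  with X = [[0,1],[1,0]], Y = [[0,1],[-1,0]], Z = [[1,0],[0,-1]] as in the paper.\<close>
fun pmat :: "pauli1 \<Rightarrow> bool \<Rightarrow> bool \<Rightarrow> complex" where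
  "pmat PI r c = (if r = c then 1 else 0)"
| "pmat PX r c = (if r = c then 0 else 1)"
| "pmat PY r c = (if r = c then 0 else if r then -1 else 1)"
| "pmat PZ r c = (if r = c then (if r then -1 else 1) else 0)"

definition mat2_mult :: "(bool \<Rightarrow> bool \<Rightarrow> complex) \<Rightarrow> (bool \<Rightarrow> bool \<Rightarrow> complex) \<Rightarrow> bool \<Rightarrow> bool \<Rightarrow> complex" where
  "mat2_mult A B r c = (\<Sum>k\<in>UNIV. A r k * B k c)"

text \<open>Multiplication table of the single-qubit Paulis: a * b = fst (mult1 a b) * snd (mult1 a b).\<close>
fun mult1 :: "pauli1 \<Rightarrow> pauli1 \<Rightarrow> complex \<times> pauli1" where
  "mult1 PI b = (1, b)"
| "mult1 a PI = (1, a)"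
| "mult1 PX PX = (1, PI)"
| "mult1 PY PY = (-1, PI)"
| "mult1 PZ PZ = (1, PI)"
| "mult1 PX PZ = (-1, PY)"
| "mult1 PZ PX = (1, PY)"
| "mult1 PX PY = (-1, PZ)"
| "mult1 PY PX = (1, PZ)"
| "mult1 PZ PY = (1, PX)"
| "mult1 PY PZ = (-1, PX)"

lemma mult1_correct:
  "mat2_mult (pmat a) (pmat b) r c = fst (mult1 a b) * pmat (snd (mult1 a b)) r c"
  by (cases a; cases b; cases r; cases c) (simp_all add: mat2_mult_def UNIV_bool)

text \<open>An element of G^n is a phase lambda times a tensor product of single-qubit Paulis,
  represented as (lambda, [P_0, ..., P_{n-1}]) (qubits indexed from 0).\<close>
type_synonym pauli = "complex \<times> pauli1 list"

definition pmult :: "pauli \<Rightarrow> pauli \<Rightarrow> pauli" where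
  "pmult g h = (fst g * fst h * prod_list (map (\<lambda>(a,b). fst (mult1 a b)) (zip (snd g) (snd h))),
                map (\<lambda>(a,b). snd (mult1 a b)) (zip (snd g) (snd h)))"

definition pid :: "nat \<Rightarrow> pauli" where
  "pid n = (1, replicate n PI)"

text \<open>Stabilizer group generated by the list of generators (generated submonoid; G^n is finite,
  so this is the generated subgroup).\<close>
inductive_set stab_group :: "nat \<Rightarrow> pauli list \<Rightarrow> pauli set" for n gens where
  stab_id: "pid n \<in> stab_group n gens"
| stab_mult: "s \<in> stab_group n gens \<Longrightarrow> h \<in> set gens \<Longrightarrow> pmult h s \<in> stab_group n gens"

definition phases :: "complex set" where
  "phases = {1, -1, \<i>, -\<i>}"

definition up_to_phase :: "pauli set \<Rightarrow> pauli set" where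
  "up_to_phase S = {(l * fst s, snd s) | l s. l \<in> phases \<and> s \<in> S}"

text \<open>Syndrome: i-th entry True (=1) iff g anticommutes (does not commute) with g_i.\<close>
definition syndrome :: "pauli list \<Rightarrow> pauli \<Rightarrow> bool list" where
  "syndrome gens g = map (\<lambda>h. pmult g h \<noteq> pmult h g) gens"

definition Pset :: "nat \<Rightarrow> nat set \<Rightarrow> pauli set" where
  "Pset n M = {(1, ops) | ops. length ops = n \<and> (\<forall>i<n. i \<notin> M \<longrightarrow> ops ! i = PI)}"

definition Sigma_set :: "nat \<Rightarrow> pauli list \<Rightarrow> nat set \<Rightarrow> bool list set" where
  "Sigma_set n gens M = syndrome gens ` Pset n M"

definition good :: "nat \<Rightarrow> pauli list \<Rightarrow> (bool list \<Rightarrow> pauli) \<Rightarrow> nat set \<Rightarrow> bool list \<Rightarrow> bool" where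
  "good n gens phi M e \<longleftrightarrow> (\<forall>g\<in>Pset n M. syndrome gens g = e \<longrightarrow>
      pmult (phi e) g \<in> up_to_phase (stab_group n gens))"

definition fS :: "nat \<Rightarrow> pauli list \<Rightarrow> (bool list \<Rightarrow> pauli) \<Rightarrow> nat \<Rightarrow> real" where
  "fS n gens phi t = (\<Sum>M\<in>{M. M \<subseteq> {..<n} \<and> card M = t}.
      real (card {e \<in> Sigma_set n gens M. good n gens phi M e}) / real (card (Sigma_set n gens M)))
    / real (n choose t)"

definition gens5 :: "pauli list" where
  "gens5 = [(1, [PX, PZ, PZ, PX, PI]),
            (1, [PI, PX, PZ, PZ, PX]),
            (1, [PX, PI, PX, PZ, PZ]),
            (1, [PZ, PX, PI, PX, PZ])]"

definition E5 :: "pauli set" where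
  "E5 = {pid 5} \<union> {(1, (replicate 5 PI)[i := p]) | i p. i < 5 \<and> p \<in> {PX, PY, PZ}}"

definition phi5 :: "bool list \<Rightarrow> pauli" where
  "phi5 e = (THE x. x \<in> E5 \<and> syndrome gens5 x = e)"

end

theory Submission imports Defs begin

definition S5 :: "pauli list" where
"S5 = [(1, [PI, PI, PI, PI, PI]),
 (1, [PX, PZ, PZ, PX, PI]),
 (1, [PI, PX, PZ, PZ, PX]),
 (1, [PX, PI, PX, PZ, PZ]),
 (1, [PZ, PX, PI, PX, PZ]),
 (-1, [PX, PY, PI, PY, PX]),
 (-1, [PI, PZ, PY, PY, PZ]),
 (-1, [PY, PY, PZ, PI, PZ]),
 (-1, [PX, PX, PY, PI, PY]),
 (-1, [PZ, PI, PZ, PY, PY]),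
 (-1, [PY, PX, PX, PY, PI]),
 (-1, [PI, PY, PX, PX, PY]),
 (-1, [PY, PZ, PI, PZ, PY]),
 (-1, [PZ, PY, PY, PZ, PI]),
 (-1, [PY, PI, PY, PX, PX]),
 (1, [PZ, PZ, PX, PI, PX])]"

lemma stab_sub: "stab_group 5 gens5 \<subseteq> set S5"
proof
  fix x assume "x \<in> stab_group 5 gens5"
  then show "x \<in> set S5"
  proof (induction rule: stab_group.induct)
    case stab_id then show ?case by (simp add: S5_def pid_def eval_nat_numeral)
  next
    case (stab_mult s h)
    have "\<forall>h\<in>set gens5. \<forall>s\<in>set S5. pmult h s \<in> set S5"
      unfolding S5_def gens5_def by (simp add: pmult_def)
    then show ?case using stab_mult by blast
  qed
qed

lemma stab_sup: "set S5 \<subseteq> stab_group 5 gens5" (is "_ \<subseteq> ?S")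
proof -
  have s0: "(1, [PI, PI, PI, PI, PI]) \<in> ?S" using stab_id[of 5 gens5] by (simp add: pid_def eval_nat_numeral)
  have s1: "(1, [PX, PZ, PZ, PX, PI]) \<in> ?S" using stab_mult[OF s0, of "gens5 ! 0"] by (simp add: gens5_def pmult_def)
  have s2: "(1, [PI, PX, PZ, PZ, PX]) \<in> ?S" using stab_mult[OF s0, of "gens5 ! 1"] by (simp add: gens5_def pmult_def)
  have s3: "(1, [PX, PI, PX, PZ, PZ]) \<in> ?S" using stab_mult[OF s0, of "gens5 ! 2"] by (simp add: gens5_def pmult_def)
  have s4: "(1, [PZ, PX, PI, PX, PZ]) \<in> ?S" using stab_mult[OF s0, of "gens5 ! 3"] by (simp add: gens5_def pmult_def)
  have s5: "(-1, [PX, PY, PI, PY, PX]) \<in> ?S" using stab_mult[OF s1, of "gens5 ! 1"] by (simp add: gens5_def pmult_def)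
  have s6: "(-1, [PI, PZ, PY, PY, PZ]) \<in> ?S" using stab_mult[OF s1, of "gens5 ! 2"] by (simp add: gens5_def pmult_def)
  have s7: "(-1, [PY, PY, PZ, PI, PZ]) \<in> ?S" using stab_mult[OF s1, of "gens5 ! 3"] by (simp add: gens5_def pmult_def)
  have s8: "(-1, [PX, PX, PY, PI, PY]) \<in> ?S" using stab_mult[OF s2, of "gens5 ! 2"] by (simp add: gens5_def pmult_def)
  have s9: "(-1, [PZ, PI, PZ, PY, PY]) \<in> ?S" using stab_mult[OF s2, of "gens5 ! 3"] by (simp add: gens5_def pmult_def)
  have s10: "(-1, [PY, PX, PX, PY, PI]) \<in> ?S" using stab_mult[OF s3, of "gens5 ! 3"] by (simp add: gens5_def pmult_def)
  have s11: "(-1, [PI, PY, PX, PX, PY]) \<in> ?S" using stab_mult[OF s5, of "gens5 ! 2"] by (simp add: gens5_def pmult_def)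
  have s12: "(-1, [PY, PZ, PI, PZ, PY]) \<in> ?S" using stab_mult[OF s5, of "gens5 ! 3"] by (simp add: gens5_def pmult_def)
  have s13: "(-1, [PZ, PY, PY, PZ, PI]) \<in> ?S" using stab_mult[OF s6, of "gens5 ! 3"] by (simp add: gens5_def pmult_def)
  have s14: "(-1, [PY, PI, PY, PX, PX]) \<in> ?S" using stab_mult[OF s8, of "gens5 ! 3"] by (simp add: gens5_def pmult_def)
  have s15: "(1, [PZ, PZ, PX, PI, PX]) \<in> ?S" using stab_mult[OF s11, of "gens5 ! 3"] by (simp add: gens5_def pmult_def)
  show ?thesis unfolding S5_def using s0 s1 s2 s3 s4 s5 s6 s7 s8 s9 s10 s11 s12 s13 s14 s15 by simp
qed

lemma stab_eq: "stab_group 5 gens5 = set S5"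
  using stab_sub stab_sup by blast



lemma S5_phases: "s \<in> set S5 \<Longrightarrow> fst s \<in> {1,-1}"
  unfolding S5_def by auto

lemma upS_iff:
  assumes "fst x \<in> {1,-1}"
  shows "x \<in> up_to_phase (stab_group 5 gens5) \<longleftrightarrow> snd x \<in> set (map snd S5)"
proof
  assume "x \<in> up_to_phase (stab_group 5 gens5)"
  then show "snd x \<in> set (map snd S5)" unfolding up_to_phase_def stab_eq by force
next
  assume "snd x \<in> set (map snd S5)"
  then obtain s where s: "s \<in> set S5" "snd s = snd x" by auto
  have ph: "fst s \<in> {1,-1}" using S5_phases[OF s(1)] .
  define l where "l = fst x * fst s"
  have "l \<in> phases" using assms ph unfolding l_def phases_def by auto
  moreover have "fst x = l * fst s" using assms ph unfolding l_def by auto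
  ultimately show "x \<in> up_to_phase (stab_group 5 gens5)"
    unfolding up_to_phase_def stab_eq using s
    by (metis (mono_tags, lifting) mem_Collect_eq prod.collapse)
qed

lemma mult1_phase: "fst (mult1 a b) \<in> {1,-1}"
  by (cases a; cases b; simp)

lemma prod_list_pm1: "\<forall>x\<in>set xs. x \<in> {1,-1::complex} \<Longrightarrow> prod_list xs \<in> {1,-1}"
  by (induction xs) auto

lemma pmult_phase:
  assumes "fst g \<in> {1,-1}" "fst h \<in> {1,-1}"
  shows "fst (pmult g h) \<in> {1,-1}"
proof -
  have "prod_list (map (\<lambda>(a,b). fst (mult1 a b)) (zip (snd g) (snd h))) \<in> {1,-1}"
    apply (rule prod_list_pm1) apply clarsimp by (metis insertE mult1_phase singletonD)
  then show ?thesis using assms unfolding pmult_def by auto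
qed

definition E5l :: "pauli list" where
"E5l = [(1, [PI, PI, PI, PI, PI]), (1, [PX, PI, PI, PI, PI]), (1, [PY, PI, PI, PI, PI]), (1, [PZ, PI, PI, PI, PI]), (1, [PI, PX, PI, PI, PI]), (1, [PI, PY, PI, PI, PI]), (1, [PI, PZ, PI, PI, PI]), (1, [PI, PI, PX, PI, PI]), (1, [PI, PI, PY, PI, PI]), (1, [PI, PI, PZ, PI, PI]), (1, [PI, PI, PI, PX, PI]), (1, [PI, PI, PI, PY, PI]), (1, [PI, PI, PI, PZ, PI]), (1, [PI, PI, PI, PI, PX]), (1, [PI, PI, PI, PI, PY]), (1, [PI, PI, PI, PI, PZ])]"

lemma lt5: "(i::nat) < 5 \<longleftrightarrow> i = 0 \<or> i = 1 \<or> i = 2 \<or> i = 3 \<or> i = 4"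
  by auto

lemma E5_eq: "E5 = set E5l"
proof -
  have "{(1::complex, (replicate 5 PI)[i := p]) | i p. i < 5 \<and> p \<in> {PX, PY, PZ}}
     = (\<lambda>(i,p). (1, (replicate 5 PI)[i := p])) ` ({0,1,2,3,4} \<times> {PX,PY,PZ})"
    by (auto simp: lt5)
  then show ?thesis unfolding E5_def E5l_def pid_def by (simp add: eval_nat_numeral insert_commute)
qed

definition all4 :: "bool list list" where
"all4 = [[a,b,c,d]. a <- [False,True], b <- [False,True], c <- [False,True], d <- [False,True]]"

lemma len4: "length e = 4 \<Longrightarrow> e \<in> set all4"
proof -
  assume "length e = 4"
  then have "length e = Suc (Suc (Suc (Suc 0)))" by simp
  then obtain a b c d where "e = [a,b,c,d]"
    by (auto simp: length_Suc_conv)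
  then show ?thesis unfolding all4_def by (cases a; cases b; cases c; cases d) auto
qed

lemma syn_E5: "distinct (map (syndrome gens5) E5l)" "set all4 \<subseteq> set (map (syndrome gens5) E5l)"
  unfolding E5l_def all4_def gens5_def syndrome_def pmult_def by simp_all

lemma uniq: "\<forall>e::bool list. length e = 4 \<longrightarrow> (\<exists>!x. x \<in> E5 \<and> syndrome gens5 x = e)"
proof (intro allI impI)
  fix e :: "bool list" assume "length e = 4"
  then have "e \<in> set (map (syndrome gens5) E5l)" using len4 syn_E5(2) by blast
  then obtain x where x: "x \<in> set E5l" "syndrome gens5 x = e" by auto
  have inj: "inj_on (syndrome gens5) (set E5l)" using syn_E5(1) distinct_map by blast
  show "\<exists>!x. x \<in> E5 \<and> syndrome gens5 x = e"
    using x inj unfolding E5_eq inj_on_def by blast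
qed

lemma phi5_eq: assumes "e = syndrome gens5 x" "x \<in> E5" shows "phi5 e = x"
proof -
  have l: "length e = 4" using assms(1) by (simp add: syndrome_def gens5_def)
  show ?thesis unfolding phi5_def
    using uniq[rule_format, OF l] assms by (intro the1_equality) auto
qed



lemma phi5_vals:
  "phi5 [False, False, False, False] = (1, [PI, PI, PI, PI, PI])"
  "phi5 [False, False, False, True] = (1, [PX, PI, PI, PI, PI])"
  "phi5 [True, False, True, True] = (1, [PY, PI, PI, PI, PI])"
  "phi5 [True, False, True, False] = (1, [PZ, PI, PI, PI, PI])"
  "phi5 [True, False, False, False] = (1, [PI, PX, PI, PI, PI])"
  "phi5 [True, True, False, True] = (1, [PI, PY, PI, PI, PI])"
  "phi5 [False, True, False, True] = (1, [PI, PZ, PI, PI, PI])"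
  "phi5 [True, True, False, False] = (1, [PI, PI, PX, PI, PI])"
  "phi5 [True, True, True, False] = (1, [PI, PI, PY, PI, PI])"
  "phi5 [False, False, True, False] = (1, [PI, PI, PZ, PI, PI])"
  "phi5 [False, True, True, False] = (1, [PI, PI, PI, PX, PI])"
  "phi5 [True, True, True, True] = (1, [PI, PI, PI, PY, PI])"
  "phi5 [True, False, False, True] = (1, [PI, PI, PI, PZ, PI])"
  "phi5 [False, False, True, True] = (1, [PI, PI, PI, PI, PX])"
  "phi5 [False, True, True, True] = (1, [PI, PI, PI, PI, PY])"
  "phi5 [False, True, False, False] = (1, [PI, PI, PI, PI, PZ])"
  by (rule phi5_eq; simp add: E5_eq E5l_def gens5_def syndrome_def pmult_def)+

fun pl :: "nat set \<Rightarrow> nat \<Rightarrow> nat \<Rightarrow> pauli1 list list" where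
  "pl M k 0 = [[]]"
| "pl M k (Suc n) = concat (map (\<lambda>p. map (\<lambda>r. p # r) (pl M (Suc k) n))
      (if k \<in> M then [PI,PX,PY,PZ] else [PI]))"

lemma pl_set: "set (pl M k n) = {ops. length ops = n \<and> (\<forall>i<n. k + i \<notin> M \<longrightarrow> ops ! i = PI)}"
proof (induction n arbitrary: k)
  case 0 then show ?case by auto
next
  case (Suc n)
  show ?case
  proof (intro set_eqI iffI)
    fix ops assume "ops \<in> set (pl M k (Suc n))"
    then obtain p r where "ops = p # r" "r \<in> set (pl M (Suc k) n)" "k \<notin> M \<longrightarrow> p = PI"
      by (auto split: if_splits)
    then show "ops \<in> {ops. length ops = Suc n \<and> (\<forall>i<Suc n. k + i \<notin> M \<longrightarrow> ops ! i = PI)}"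
      unfolding Suc.IH by (auto simp: less_Suc_eq_0_disj)
  next
    fix ops assume a: "ops \<in> {ops. length ops = Suc n \<and> (\<forall>i<Suc n. k + i \<notin> M \<longrightarrow> ops ! i = PI)}"
    then obtain p r where o: "ops = p # r" by (cases ops) auto
    have r: "r \<in> set (pl M (Suc k) n)" unfolding Suc.IH using a o by force
    have p: "k \<notin> M \<Longrightarrow> p = PI" using a o by force
    have "p \<in> set (if k \<in> M then [PI,PX,PY,PZ] else [PI])" using p by (cases p) auto
    then show "ops \<in> set (pl M k (Suc n))" using r o by auto
  qed
qed

lemma Pset_pl: "Pset n M = (\<lambda>ops. (1, ops)) ` set (pl M 0 n)"
  unfolding Pset_def pl_set by auto



definition chk :: "(bool list \<times> pauli1 list) list \<Rightarrow> (bool list \<Rightarrow> pauli1 list \<Rightarrow> bool) \<Rightarrow> nat \<times> nat" where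
  "chk ps C = (length (filter (\<lambda>e. list_all (\<lambda>(s,g). if s = e then C e g else True) ps) (remdups (map fst ps))),
               length (remdups (map fst ps)))"

definition rM :: "nat set \<Rightarrow> real" where
  "rM M = real (card {e \<in> Sigma_set 5 gens5 M. good 5 gens5 phi5 M e}) / real (card (Sigma_set 5 gens5 M))"

definition U5 :: "pauli set" where "U5 = up_to_phase (stab_group 5 gens5)"

lemma U5_iff: "fst x \<in> {1,-1} \<Longrightarrow> x \<in> U5 \<longleftrightarrow> snd x \<in> set (map snd S5)"
  unfolding U5_def by (rule upS_iff)

abbreviation Cor :: "bool list \<Rightarrow> pauli1 list \<Rightarrow> bool" where
  "Cor e g \<equiv> pmult (phi5 e) (1, g) \<in> U5"

abbreviation pairs :: "nat set \<Rightarrow> (bool list \<times> pauli1 list) list" where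
  "pairs M \<equiv> map (\<lambda>g. (syndrome gens5 (1, g), g)) (pl M 0 5)"

lemma Sigma_pairs: "Sigma_set 5 gens5 M = set (map fst (pairs M))"
  unfolding Sigma_set_def Pset_pl by (simp add: image_image)

lemma good_pairs: "good 5 gens5 phi5 M e \<longleftrightarrow> list_all (\<lambda>(s,g). if s = e then Cor e g else True) (pairs M)"
  unfolding good_def Pset_pl U5_def by (auto simp: list_all_iff)

lemma rM_chk: "rM M = real (fst (chk (pairs M) Cor)) / real (snd (chk (pairs M) Cor))"
proof -
  have "{e \<in> Sigma_set 5 gens5 M. good 5 gens5 phi5 M e}
     = set (filter (\<lambda>e. list_all (\<lambda>(s,g). if s = e then Cor e g else True) (pairs M)) (remdups (map fst (pairs M))))"
    unfolding Sigma_pairs good_pairs by auto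
  then show ?thesis unfolding rM_def chk_def Sigma_pairs
    by (simp only: card_set fst_conv snd_conv remdups_filter remdups_remdups)
qed

lemma bad_pairs: "e \<in> set (map fst (filter (\<lambda>(s,g). \<not> Cor s g) (pairs M))) \<Longrightarrow> \<not> good 5 gens5 phi5 M e"
  unfolding good_pairs by (auto simp: list_all_iff)

lemma pl5: "pl M k 5 = concat (map (\<lambda>p. map (\<lambda>r. p # r) (pl M (Suc k) 4)) (if k \<in> M then [PI,PX,PY,PZ] else [PI]))"
  using pl.simps(2)[of M k 4] by (simp only: Suc_numeral Suc_1 semiring_norm)
lemma pl4: "pl M k 4 = concat (map (\<lambda>p. map (\<lambda>r. p # r) (pl M (Suc k) 3)) (if k \<in> M then [PI,PX,PY,PZ] else [PI]))"
  using pl.simps(2)[of M k 3] by (simp only: Suc_numeral Suc_1 semiring_norm)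
lemma pl3: "pl M k 3 = concat (map (\<lambda>p. map (\<lambda>r. p # r) (pl M (Suc k) 2)) (if k \<in> M then [PI,PX,PY,PZ] else [PI]))"
  using pl.simps(2)[of M k 2] by (simp only: Suc_numeral Suc_1 semiring_norm)
lemma pl2: "pl M k 2 = concat (map (\<lambda>p. map (\<lambda>r. p # r) (pl M (Suc k) 1)) (if k \<in> M then [PI,PX,PY,PZ] else [PI]))"
  using pl.simps(2)[of M k 1] by (simp only: Suc_numeral Suc_1 semiring_norm)
lemma pl1: "pl M k 1 = concat (map (\<lambda>p. map (\<lambda>r. p # r) (pl M (Suc k) 0)) (if k \<in> M then [PI,PX,PY,PZ] else [PI]))"
  using pl.simps(2)[of M k 0] by (simp only: One_nat_def)

lemma corr_simp: "fst (pmult (1, a) (1, b)) \<in> {1,-1} \<Longrightarrow> pmult (1, a) (1, b) \<in> up_to_phase (stab_group 5 gens5) \<longleftrightarrow> snd (pmult (1, a) (1, b)) \<in> set (map snd S5)"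
  by (rule upS_iff)

lemmas comp_simps = pl5 pl4 pl3 pl2 pl1 gens5_def syndrome_def pmult_def U5_iff phi5_vals S5_def chk_def

lemma "rM {0,2} = 7/16"
  unfolding rM_chk by (simp add: comp_simps)



lemma rM_e: "rM {} = 1"
  unfolding rM_chk by (simp add: comp_simps)

lemma rM_0: "rM {0} = 1"
  unfolding rM_chk by (simp add: comp_simps)

lemma rM_1: "rM {1} = 1"
  unfolding rM_chk by (simp add: comp_simps)

lemma rM_2: "rM {2} = 1"
  unfolding rM_chk by (simp add: comp_simps)

lemma rM_3: "rM {3} = 1"
  unfolding rM_chk by (simp add: comp_simps)

lemma rM_4: "rM {4} = 1"
  unfolding rM_chk by (simp add: comp_simps)

lemma rM_01: "rM {0, 1} = 7 / 16"
  unfolding rM_chk by (simp add: comp_simps)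

lemma rM_02: "rM {0, 2} = 7 / 16"
  unfolding rM_chk by (simp add: comp_simps)

lemma rM_03: "rM {0, 3} = 7 / 16"
  unfolding rM_chk by (simp add: comp_simps)

lemma rM_04: "rM {0, 4} = 7 / 16"
  unfolding rM_chk by (simp add: comp_simps)

lemma rM_12: "rM {1, 2} = 7 / 16"
  unfolding rM_chk by (simp add: comp_simps)

lemma rM_13: "rM {1, 3} = 7 / 16"
  unfolding rM_chk by (simp add: comp_simps)

lemma rM_14: "rM {1, 4} = 7 / 16"
  unfolding rM_chk by (simp add: comp_simps)

lemma rM_23: "rM {2, 3} = 7 / 16"
  unfolding rM_chk by (simp add: comp_simps)

lemma rM_24: "rM {2, 4} = 7 / 16"
  unfolding rM_chk by (simp add: comp_simps)

lemma rM_34: "rM {3, 4} = 7 / 16"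
  unfolding rM_chk by (simp add: comp_simps)

lemma bad_012: "\<forall>e. length e = 4 \<longrightarrow> \<not> good 5 gens5 phi5 {0, 1, 2} e"
proof -
  have "set all4 \<subseteq> set (map fst (filter (\<lambda>(s,g). \<not> Cor s g) (pairs {0, 1, 2})))"
    by (simp add: comp_simps all4_def)
  then show ?thesis using len4 bad_pairs by blast
qed

lemma bad_013: "\<forall>e. length e = 4 \<longrightarrow> \<not> good 5 gens5 phi5 {0, 1, 3} e"
proof -
  have "set all4 \<subseteq> set (map fst (filter (\<lambda>(s,g). \<not> Cor s g) (pairs {0, 1, 3})))"
    by (simp add: comp_simps all4_def)
  then show ?thesis using len4 bad_pairs by blast
qed

lemma bad_014: "\<forall>e. length e = 4 \<longrightarrow> \<not> good 5 gens5 phi5 {0, 1, 4} e"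
proof -
  have "set all4 \<subseteq> set (map fst (filter (\<lambda>(s,g). \<not> Cor s g) (pairs {0, 1, 4})))"
    by (simp add: comp_simps all4_def)
  then show ?thesis using len4 bad_pairs by blast
qed

lemma bad_023: "\<forall>e. length e = 4 \<longrightarrow> \<not> good 5 gens5 phi5 {0, 2, 3} e"
proof -
  have "set all4 \<subseteq> set (map fst (filter (\<lambda>(s,g). \<not> Cor s g) (pairs {0, 2, 3})))"
    by (simp add: comp_simps all4_def)
  then show ?thesis using len4 bad_pairs by blast
qed

lemma bad_024: "\<forall>e. length e = 4 \<longrightarrow> \<not> good 5 gens5 phi5 {0, 2, 4} e"
proof -
  have "set all4 \<subseteq> set (map fst (filter (\<lambda>(s,g). \<not> Cor s g) (pairs {0, 2, 4})))"
    by (simp add: comp_simps all4_def)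
  then show ?thesis using len4 bad_pairs by blast
qed

lemma bad_034: "\<forall>e. length e = 4 \<longrightarrow> \<not> good 5 gens5 phi5 {0, 3, 4} e"
proof -
  have "set all4 \<subseteq> set (map fst (filter (\<lambda>(s,g). \<not> Cor s g) (pairs {0, 3, 4})))"
    by (simp add: comp_simps all4_def)
  then show ?thesis using len4 bad_pairs by blast
qed

lemma bad_123: "\<forall>e. length e = 4 \<longrightarrow> \<not> good 5 gens5 phi5 {1, 2, 3} e"
proof -
  have "set all4 \<subseteq> set (map fst (filter (\<lambda>(s,g). \<not> Cor s g) (pairs {1, 2, 3})))"
    by (simp add: comp_simps all4_def)
  then show ?thesis using len4 bad_pairs by blast
qed

lemma bad_124: "\<forall>e. length e = 4 \<longrightarrow> \<not> good 5 gens5 phi5 {1, 2, 4} e"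
proof -
  have "set all4 \<subseteq> set (map fst (filter (\<lambda>(s,g). \<not> Cor s g) (pairs {1, 2, 4})))"
    by (simp add: comp_simps all4_def)
  then show ?thesis using len4 bad_pairs by blast
qed

lemma bad_134: "\<forall>e. length e = 4 \<longrightarrow> \<not> good 5 gens5 phi5 {1, 3, 4} e"
proof -
  have "set all4 \<subseteq> set (map fst (filter (\<lambda>(s,g). \<not> Cor s g) (pairs {1, 3, 4})))"
    by (simp add: comp_simps all4_def)
  then show ?thesis using len4 bad_pairs by blast
qed

lemma bad_234: "\<forall>e. length e = 4 \<longrightarrow> \<not> good 5 gens5 phi5 {2, 3, 4} e"
proof -
  have "set all4 \<subseteq> set (map fst (filter (\<lambda>(s,g). \<not> Cor s g) (pairs {2, 3, 4})))"
    by (simp add: comp_simps all4_def)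
  then show ?thesis using len4 bad_pairs by blast
qed

lemmas rM_vals = rM_e rM_0 rM_1 rM_2 rM_3 rM_4 rM_01 rM_02 rM_03 rM_04 rM_12 rM_13 rM_14 rM_23 rM_24 rM_34
lemmas bad_vals = bad_012 bad_013 bad_014 bad_023 bad_024 bad_034 bad_123 bad_124 bad_134 bad_234



lemma fS_const:
  assumes h: "\<forall>M. M \<subseteq> {..<5} \<and> card M = t \<longrightarrow> rM M = c" and t: "t \<le> 5"
  shows "fS 5 gens5 phi5 t = c"
proof -
  let ?F = "{M. M \<subseteq> {..<5::nat} \<and> card M = t}"
  have "(\<Sum>M\<in>?F. rM M) = (\<Sum>M\<in>?F. c)" using h by (intro sum.cong) auto
  also have "\<dots> = real (card ?F) * c" by simp
  also have "card ?F = 5 choose t" using n_subsets[of "{..<5::nat}" t] by simp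
  finally have s: "(\<Sum>M\<in>?F. rM M) = real (5 choose t) * c" .
  have "(5::nat) choose t \<noteq> 0" using t by simp
  then show ?thesis unfolding fS_def using s by (simp add: rM_def[symmetric])
qed

lemma enumM:
  assumes "M \<subseteq> {..<5::nat}"
  obtains xs where "xs \<in> set (subseqs [0,1,2,3,4])" "M = set xs" "card M = length xs"
proof -
  have eq: "{..<5::nat} = set [0,1,2,3,4]" by (auto simp: lt5)
  have "M \<in> Pow (set [0,1,2,3,4::nat])" using assms eq by blast
  then have "M \<in> set ` set (subseqs [0,1,2,3,4::nat])" by (simp only: subseqs_powset)
  then obtain xs where xs: "xs \<in> set (subseqs [0,1,2,3,4::nat])" "M = set xs" by (rule imageE)
  have d: "distinct [0,1,2,3,4::nat]" by simp
  have "distinct xs" using subseqs_distinctD[OF xs(1) d] .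
  then have "card M = length xs" using xs(2) distinct_card by blast
  then show ?thesis using that xs by blast
qed

lemma low:
  assumes "\<forall>xs\<in>set (subseqs [0,1,2,3,4]). length xs = t \<longrightarrow> rM (set xs) = c"
  shows "\<forall>M. M \<subseteq> {..<5} \<and> card M = t \<longrightarrow> rM M = c"
proof (intro allI impI)
  fix M :: "nat set" assume a: "M \<subseteq> {..<5} \<and> card M = t"
  obtain xs where "xs \<in> set (subseqs [0,1,2,3,4])" "M = set xs" "card M = length xs"
    using enumM[of M] a by blast
  then show "rM M = c" using assms[rule_format] a by metis
qed

lemma t3_bad: "\<forall>xs\<in>set (subseqs [0,1,2,3,4::nat]). length xs = 3 \<longrightarrow>
   (\<forall>e. length e = 4 \<longrightarrow> \<not> good 5 gens5 phi5 (set xs) e)"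
  by (simp add: Let_def bad_vals[simplified])

lemma Pset_mono: "T \<subseteq> M \<Longrightarrow> Pset n T \<subseteq> Pset n M"
  unfolding Pset_def by blast

lemma high:
  assumes "3 \<le> t"
  shows "\<forall>M. M \<subseteq> {..<5} \<and> card M = t \<longrightarrow> rM M = 0"
proof (intro allI impI)
  fix M :: "nat set" assume a: "M \<subseteq> {..<5} \<and> card M = t"
  obtain T where T: "T \<subseteq> M" "card T = 3" using obtain_subset_with_card_n[of 3 M] a assms by metis
  obtain xs where xs: "xs \<in> set (subseqs [0,1,2,3,4])" "T = set xs" "card T = length xs"
    using enumM[of T] T(1) a by blast
  have bT: "\<forall>e. length e = 4 \<longrightarrow> \<not> good 5 gens5 phi5 T e" using t3_bad[rule_format, OF xs(1)] xs(2,3) T(2) by simp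
  have "{e \<in> Sigma_set 5 gens5 M. good 5 gens5 phi5 M e} = {}"
  proof (rule ccontr)
    assume "{e \<in> Sigma_set 5 gens5 M. good 5 gens5 phi5 M e} \<noteq> {}"
    then obtain e where e: "e \<in> Sigma_set 5 gens5 M" "good 5 gens5 phi5 M e" by auto
    have "length e = 4" using e(1) unfolding Sigma_set_def syndrome_def gens5_def by auto
    moreover have "good 5 gens5 phi5 T e" using e(2) Pset_mono[OF T(1)] unfolding good_def by blast
    ultimately show False using bT by blast
  qed
  then show "rM M = 0" unfolding rM_def by (simp only: card.empty of_nat_0 div_0)
qed

theorem mainTheorem2:
  shows "(\<forall>e::bool list. length e = 4 \<longrightarrow> (\<exists>!x. x \<in> E5 \<and> syndrome gens5 x = e))
    \<and> fS 5 gens5 phi5 0 = 1 \<and> fS 5 gens5 phi5 1 = 1 \<and> fS 5 gens5 phi5 2 = 7 / 16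
    \<and> fS 5 gens5 phi5 3 = 0 \<and> fS 5 gens5 phi5 4 = 0 \<and> fS 5 gens5 phi5 5 = 0"
proof -
  have v0: "\<forall>xs\<in>set (subseqs [0,1,2,3,4::nat]). length xs = 0 \<longrightarrow> rM (set xs) = 1"
    by (simp add: Let_def rM_vals[simplified])
  have v1: "\<forall>xs\<in>set (subseqs [0,1,2,3,4::nat]). length xs = 1 \<longrightarrow> rM (set xs) = 1"
    by (simp add: Let_def rM_vals[simplified])
  have v2: "\<forall>xs\<in>set (subseqs [0,1,2,3,4::nat]). length xs = 2 \<longrightarrow> rM (set xs) = 7/16"
    by (simp add: Let_def rM_vals[simplified])
  show ?thesis
    using uniq fS_const[OF low[OF v0]] fS_const[OF low[OF v1]] fS_const[OF low[OF v2]]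
      fS_const[OF high] by simp
qed


end
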